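(* Let $S,C,D,\Delta\ge1$, $\mathcal{X}\subseteq\mathbb{R}^D$ nonempty convex compact, and $f_h$, $h=1,\dots,C$, convex continuously differentiable with gradients $g_h$ satisfying $\|g_h(x)\|\le L_h$ on $\mathcal{X}$. Suppose the weights $W_{i,k}[J,h]\ge0$ are nonnegative and satisfy SLC with constant $M>0$, the server graph is complete (consensus step $x^I_{0,k+1}=\frac1S\sum_{J=1}^S x^J_{\Delta,k}$), and all servers start from the same point $x^J_{0,0}=x_{0,0}\in\mathcal{X}$; let $x_{0,k}$ be the common value of $x^J_{0,k}$. Then for all $y\in\mathcal{X}$ and all $k\ge0$, $$\|x_{0,k+1}-y\|^2\le\|x_{0,k}-y\|^2-\tfrac{2M}{S}\alpha_k\big(f(x_{0,k})-f(y)\big)+\tfrac1S\alpha_k^2C_0^2,$$ where $C_0^2=\sum_{J=1}^S\sum_{i=1}^{\Delta}\Big[\big(\sum_{h=1}^C W_{i-1,k}[J,h]L_h\big)^2+2\big(\sum_{h=1}^C W_{i-1,k}[J,h]L_h\big)\big(\sum_{t=1}^{i-1}\sum_{l=1}^C W_{t-1,k}[J,l]L_l\big)\Big].$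
   Context: $\mathcal{P}_{\mathcal{X}}$ is Euclidean projection onto $\mathcal{X}$; $f=\sum_{h=1}^Cf_h$; step sizes $\alpha_k>0$. Weight matrices $W_{i,k}\in\mathbb{R}^{S\times C}$ ($0\le i\le\Delta-1$, $k\ge0$). Symmetric Learning Condition (SLC): there is $M>0$ with $\sum_{i=1}^{\Delta}\sum_{J=1}^S W_{i-1,k}[J,h]=M$ for all $k\ge0$ and all $h$. Iteration: for each $k\ge0$ and $i=1,\dots,\Delta$, $x^J_{i,k}=\mathcal{P}_{\mathcal{X}}\big[x^J_{i-1,k}-\alpha_k\sum_{h=1}^C W_{i-1,k}[J,h]\,g_h(x^J_{i-1,k})\big]$, followed by the consensus step. *)

theory Defs
  imports "HOL-Analysis.Analysis"
begin

definition proj :: "'a::euclidean_space set \<Rightarrow> 'a \<Rightarrow> 'a" where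
  "proj X z = closest_point X z"

definition C0sq ::
  "nat \<Rightarrow> nat \<Rightarrow> nat \<Rightarrow> (nat \<Rightarrow> nat \<Rightarrow> nat \<Rightarrow> nat \<Rightarrow> real) \<Rightarrow> (nat \<Rightarrow> real) \<Rightarrow> nat \<Rightarrow> real" where
  "C0sq S C \<Delta> W L k =
     (\<Sum>J=1..S. \<Sum>i=1..\<Delta>.
        (\<Sum>h=1..C. W (i-1) k J h * L h)^2
        + 2 * (\<Sum>h=1..C. W (i-1) k J h * L h)
            * (\<Sum>t=1..i-1. \<Sum>l=1..C. W (t-1) k J l * L l))"

end

theory Submission
  imports Defs
begin

lemma grad_ineq:
  fixes f :: "'a::euclidean_space \<Rightarrow> real"
  assumes cv: "convex_on UNIV f" and d: "(f has_derivative (\<lambda>v. G \<bullet> v)) (at z)"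
  shows "f z + G \<bullet> (y - z) \<le> f y"
proof -
  define \<phi> where "\<phi> t = f (z + t *\<^sub>R (y - z))" for t :: real
  have c: "convex_on UNIV \<phi>"
    unfolding convex_on_def \<phi>_def
  proof (intro conjI allI impI ballI)
    show "convex (UNIV::real set)" by simp
  next
    fix a b u v :: real assume "0 \<le> u" "0 \<le> v" "u + v = 1"
    then have "z + (u * a + v * b) *\<^sub>R (y - z) = u *\<^sub>R (z + a *\<^sub>R (y - z)) + v *\<^sub>R (z + b *\<^sub>R (y - z))"
      by (simp add: algebra_simps scaleR_add_left[symmetric] del: scaleR_add_left)
    then show "f (z + (u *\<^sub>R a + v *\<^sub>R b) *\<^sub>R (y - z)) \<le> u * f (z + a *\<^sub>R (y - z)) + v * f (z + b *\<^sub>R (y - z))"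
      using cv \<open>0 \<le> u\<close> \<open>0 \<le> v\<close> \<open>u + v = 1\<close> unfolding convex_on_def by simp
  qed
  have "((\<lambda>t. z + t *\<^sub>R (y - z)) has_derivative (\<lambda>t. t *\<^sub>R (y - z))) (at 0)"
    by (auto intro!: derivative_eq_intros)
  then have "(\<phi> has_derivative (\<lambda>t. G \<bullet> (t *\<^sub>R (y - z)))) (at 0)"
    unfolding \<phi>_def using has_derivative_compose[of "\<lambda>t. z + t *\<^sub>R (y - z)" _ 0 UNIV f "\<lambda>v. G \<bullet> v"] d
    by (simp only: add_0_right scaleR_zero_left)
  then have "(\<phi> has_field_derivative (G \<bullet> (y - z))) (at 0)"
    by (simp add: has_field_derivative_def mult.commute[of _ "G \<bullet> (y - z)"])
  from convex_on_imp_above_tangent[OF c, of 0 1 "G \<bullet> (y - z)"] this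
  have "\<phi> 1 - \<phi> 0 \<ge> G \<bullet> (y - z)" by simp
  then show ?thesis by (simp add: \<phi>_def)
qed


lemma avg_sq:
  fixes v :: "nat \<Rightarrow> 'a::euclidean_space"
  assumes "finite A" "card A > 0"
  shows "(norm ((1 / real (card A)) *\<^sub>R (\<Sum>j\<in>A. v j)))^2 \<le> (1 / real (card A)) * (\<Sum>j\<in>A. (norm (v j))^2)"
proof -
  define n where "n = real (card A)"
  define m where "m = (1 / n) *\<^sub>R (\<Sum>j\<in>A. v j)"
  have n0: "n > 0" using assms by (simp add: n_def)
  have sm: "(\<Sum>j\<in>A. v j) = n *\<^sub>R m" using n0 by (simp add: m_def)
  have "0 \<le> (\<Sum>j\<in>A. (norm (v j - m))^2)" by (simp add: sum_nonneg)
  also have "\<dots> = (\<Sum>j\<in>A. (norm (v j))^2 - 2 * (v j \<bullet> m) + (norm m)^2)"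
    by (intro sum.cong refl) (simp add: power2_norm_eq_inner inner_diff_left inner_diff_right inner_commute)
  also have "\<dots> = (\<Sum>j\<in>A. (norm (v j))^2) - 2 * ((\<Sum>j\<in>A. v j) \<bullet> m) + n * (norm m)^2"
    by (simp add: sum.distrib sum_subtractf sum_distrib_left inner_sum_left n_def)
  also have "\<dots> = (\<Sum>j\<in>A. (norm (v j))^2) - n * (norm m)^2"
    by (simp add: sm power2_norm_eq_inner)
  finally have "n * (norm m)^2 \<le> (\<Sum>j\<in>A. (norm (v j))^2)" by simp
  then have "(norm m)^2 \<le> (1/n) * (\<Sum>j\<in>A. (norm (v j))^2)"
    using n0 by (simp add: field_simps)
  then show ?thesis by (simp add: m_def n_def)
qed

lemma exp_sq:
  fixes w d :: "'a::real_inner"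
  shows "(norm (w - a *\<^sub>R d))^2 = (norm w)^2 - 2 * a * (d \<bullet> w) + a^2 * (norm d)^2"
  unfolding power2_norm_eq_inner
  by (simp add: inner_diff_left inner_diff_right inner_commute power2_eq_square algebra_simps)

theorem lemma6:
  fixes S C \<Delta> :: nat
    and X :: "'a::euclidean_space set"
    and fh :: "nat \<Rightarrow> 'a \<Rightarrow> real"
    and g :: "nat \<Rightarrow> 'a \<Rightarrow> 'a"
    and L :: "nat \<Rightarrow> real"
    and W :: "nat \<Rightarrow> nat \<Rightarrow> nat \<Rightarrow> nat \<Rightarrow> real"
    and M :: real
    and \<alpha> :: "nat \<Rightarrow> real"
    and x :: "nat \<Rightarrow> nat \<Rightarrow> nat \<Rightarrow> 'a"
    and x00 :: 'a
  assumes S1: "S \<ge> 1" and C1: "C \<ge> 1" and D1: "\<Delta> \<ge> 1"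
    and Xne: "X \<noteq> {}" and Xconv: "convex X" and Xcomp: "compact X"
    and fconv: "\<And>h. h \<in> {1..C} \<Longrightarrow> convex_on UNIV (fh h)"
    and fderiv: "\<And>h z. h \<in> {1..C} \<Longrightarrow> (fh h has_derivative (\<lambda>v. g h z \<bullet> v)) (at z)"
    and gcont: "\<And>h. h \<in> {1..C} \<Longrightarrow> continuous_on UNIV (g h)"
    and gbound: "\<And>h z. h \<in> {1..C} \<Longrightarrow> z \<in> X \<Longrightarrow> norm (g h z) \<le> L h"
    and Wnn: "\<And>i k J h. i < \<Delta> \<Longrightarrow> J \<in> {1..S} \<Longrightarrow> h \<in> {1..C} \<Longrightarrow> W i k J h \<ge> 0"
    and Mpos: "M > 0"
    and SLC: "\<And>k h. h \<in> {1..C} \<Longrightarrow> (\<Sum>i=1..\<Delta>. \<Sum>J=1..S. W (i-1) k J h) = M"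
    and alpha_pos: "\<And>k. \<alpha> k > 0"
    and local_step: "\<And>J i k. J \<in> {1..S} \<Longrightarrow> i \<in> {1..\<Delta>} \<Longrightarrow>
        x J i k = proj X (x J (i-1) k - \<alpha> k *\<^sub>R (\<Sum>h=1..C. W (i-1) k J h *\<^sub>R g h (x J (i-1) k)))"
    and consensus: "\<And>I k. I \<in> {1..S} \<Longrightarrow>
        x I 0 (Suc k) = (1 / real S) *\<^sub>R (\<Sum>J=1..S. x J \<Delta> k)"
    and init: "x00 \<in> X" "\<And>J. J \<in> {1..S} \<Longrightarrow> x J 0 0 = x00"
  shows "\<forall>y\<in>X. \<forall>k. \<forall>J\<in>{1..S}.
     (norm (x J 0 (Suc k) - y))^2
       \<le> (norm (x J 0 k - y))^2
          - 2 * M / real S * \<alpha> k * ((\<Sum>h=1..C. fh h (x J 0 k)) - (\<Sum>h=1..C. fh h y))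
          + 1 / real S * (\<alpha> k)^2 * C0sq S C \<Delta> W L k"
proof (intro ballI allI)
  fix y k J
  assume yX: "y \<in> X" and J: "J \<in> {1..S}"
  have Xcl: "closed X" using Xcomp by (rule compact_imp_closed)
  have P_in: "\<And>w. proj X w \<in> X"
    unfolding proj_def using closest_point_in_set[OF Xcl Xne] .
  have P_lip: "\<And>a b. norm (proj X a - proj X b) \<le> norm (a - b)"
    unfolding proj_def using closest_point_lipschitz[OF Xconv Xcl Xne] by (simp add: dist_norm)
  have P_self: "\<And>b. b \<in> X \<Longrightarrow> proj X b = b"
    unfolding proj_def by (simp add: closest_point_self)
  have Spos: "real S > 0" using S1 by simp
  have cardS: "card {1..S} = S" by simp
  have x0eq: "x I 0 k = x J 0 k" if "I \<in> {1..S}" for I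
  proof (cases k)
    case 0 then show ?thesis using init(2) that J by simp
  next
    case (Suc k') then show ?thesis using consensus that J by simp
  qed
  have xiX: "x I i kk \<in> X" if "I \<in> {1..S}" "i \<in> {1..\<Delta>}" for I i kk
    using local_step[OF that] P_in by simp
  have cX: "x J 0 k \<in> X"
  proof (cases k)
    case 0 then show ?thesis using init J by simp
  next
    case (Suc k')
    have "x J 0 k = (\<Sum>I\<in>{1..S}. (1 / real S) *\<^sub>R x I \<Delta> k')"
      using consensus[OF J, of k'] Suc by (simp add: scaleR_sum_right)
    also have "\<dots> \<in> X"
      by (rule convex_sum) (use Xconv S1 D1 xiX in auto)
    finally show ?thesis .
  qed
  define c where "c = x J 0 k"
  have Lnn: "L h \<ge> 0" if "h \<in> {1..C}" for h
    using gbound[OF that cX] norm_ge_zero order_trans by blast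
  define B where "B I i = (\<Sum>h=1..C. W (i-1) k I h * L h)" for I i
  define E where "E I i = (\<Sum>h=1..C. W (i-1) k I h * (fh h c - fh h y))" for I i
  define Q where "Q I n = (\<Sum>i=1..n. (B I i)^2 + 2 * B I i * (\<Sum>t=1..i-1. B I t))" for I n
  have main: "\<forall>i. i \<le> \<Delta> \<longrightarrow> norm (x I i k - c) \<le> \<alpha> k * (\<Sum>t=1..i. B I t)
     \<and> (norm (x I i k - y))^2 \<le> (norm (c - y))^2 - 2 * \<alpha> k * (\<Sum>t=1..i. E I t) + (\<alpha> k)^2 * Q I i"
    if I: "I \<in> {1..S}" for I
  proof (intro allI)
    fix i show "i \<le> \<Delta> \<longrightarrow> norm (x I i k - c) \<le> \<alpha> k * (\<Sum>t=1..i. B I t)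
     \<and> (norm (x I i k - y))^2 \<le> (norm (c - y))^2 - 2 * \<alpha> k * (\<Sum>t=1..i. E I t) + (\<alpha> k)^2 * Q I i"
    proof (induction i)
      case 0 then show ?case using x0eq[OF I] by (simp add: c_def Q_def)
    next
      case (Suc i)
      show ?case
      proof
        assume iD: "Suc i \<le> \<Delta>"
        with Suc.IH have IH1: "norm (x I i k - c) \<le> \<alpha> k * (\<Sum>t=1..i. B I t)"
          and IH2: "(norm (x I i k - y))^2 \<le> (norm (c - y))^2 - 2 * \<alpha> k * (\<Sum>t=1..i. E I t) + (\<alpha> k)^2 * Q I i"
          by auto
        define z where "z = x I i k"
        define P where "P = (\<Sum>t=1..i. B I t)"
        define b where "b = B I (Suc i)"
        define e where "e = E I (Suc i)"
        have zX: "z \<in> X"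
        proof (cases i)
          case 0 then show ?thesis using cX x0eq[OF I] by (simp add: z_def)
        next
          case (Suc i') then show ?thesis using xiX[OF I] iD by (simp add: z_def)
        qed
        define d where "d = (\<Sum>h=1..C. W i k I h *\<^sub>R g h z)"
        have step: "x I (Suc i) k = proj X (z - \<alpha> k *\<^sub>R d)"
          using local_step[OF I, of "Suc i" k] iD by (simp add: z_def d_def)
        have Wi: "W i k I h \<ge> 0" if "h \<in> {1..C}" for h
          using Wnn[OF _ I that] iD by simp
        have nd: "norm d \<le> b"
        proof -
          have "norm d \<le> (\<Sum>h=1..C. norm (W i k I h *\<^sub>R g h z))"
            unfolding d_def by (rule norm_sum)
          also have "\<dots> \<le> (\<Sum>h=1..C. W i k I h * L h)"
            by (rule sum_mono) (use Wi gbound zX in \<open>auto intro: mult_left_mono\<close>)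
          finally show ?thesis by (simp add: b_def B_def)
        qed
        have b0: "b \<ge> 0" using nd norm_ge_zero order_trans by blast
        have P0: "P \<ge> 0" unfolding P_def B_def
          by (intro sum_nonneg) (use Wnn Lnn I iD in auto)
        have a0: "\<alpha> k > 0" by (rule alpha_pos)
        have zc: "norm (z - c) \<le> \<alpha> k * P" using IH1 by (simp add: z_def P_def)
        have d1: "norm (x I (Suc i) k - c) \<le> \<alpha> k * (P + b)"
        proof -
          have "norm (x I (Suc i) k - z) \<le> norm ((z - \<alpha> k *\<^sub>R d) - z)"
            using P_lip[of "z - \<alpha> k *\<^sub>R d" z] P_self[OF zX] step by simp
          also have "\<dots> = \<alpha> k * norm d" using a0 by simp
          also have "\<dots> \<le> \<alpha> k * b" using nd a0 by simp
          finally have "norm (x I (Suc i) k - z) \<le> \<alpha> k * b" .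
          moreover have "norm (x I (Suc i) k - c) \<le> norm (x I (Suc i) k - z) + norm (z - c)"
            by (metis norm_triangle_ineq diff_add_cancel add_diff_eq)
          ultimately show ?thesis using zc by (simp add: algebra_simps)
        qed
        have inner_lb: "d \<bullet> (z - y) \<ge> e - b * (\<alpha> k * P)"
        proof -
          have "d \<bullet> (z - y) = (\<Sum>h=1..C. W i k I h * (g h z \<bullet> (z - y)))"
            by (simp add: d_def inner_sum_left)
          also have "\<dots> \<ge> (\<Sum>h=1..C. W i k I h * (fh h c - fh h y) - W i k I h * L h * (\<alpha> k * P))"
          proof (rule sum_mono)
            fix h assume h: "h \<in> {1..C}"
            have g1: "fh h z + g h z \<bullet> (y - z) \<le> fh h y"
              by (rule grad_ineq[OF fconv[OF h] fderiv[OF h]])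
            have g2: "fh h c + g h c \<bullet> (z - c) \<le> fh h z"
              by (rule grad_ineq[OF fconv[OF h] fderiv[OF h]])
            have "\<bar>g h c \<bullet> (z - c)\<bar> \<le> norm (g h c) * norm (z - c)"
              by (rule Cauchy_Schwarz_ineq2)
            also have "\<dots> \<le> L h * (\<alpha> k * P)"
              by (rule mult_mono) (use gbound[OF h cX] zc Lnn[OF h] in \<open>auto simp: c_def\<close>)
            finally have g3: "g h c \<bullet> (z - c) \<ge> - (L h * (\<alpha> k * P))" by linarith
            have "g h z \<bullet> (z - y) = - (g h z \<bullet> (y - z))"
              by (simp add: inner_diff_right)
            then have "g h z \<bullet> (z - y) \<ge> (fh h c - fh h y) - L h * (\<alpha> k * P)"
              using g1 g2 g3 by linarith
            from mult_left_mono[OF this Wi[OF h]]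
            show "W i k I h * (fh h c - fh h y) - W i k I h * L h * (\<alpha> k * P) \<le> W i k I h * (g h z \<bullet> (z - y))"
              by (simp add: algebra_simps)
          qed
          also have "(\<Sum>h=1..C. W i k I h * (fh h c - fh h y) - W i k I h * L h * (\<alpha> k * P)) = e - b * (\<alpha> k * P)"
            by (simp add: e_def b_def E_def B_def sum_subtractf sum_distrib_right)
          finally show ?thesis .
        qed
        have d2: "(norm (x I (Suc i) k - y))^2 \<le> (norm (c - y))^2 - 2 * \<alpha> k * ((\<Sum>t=1..i. E I t) + e) + (\<alpha> k)^2 * (Q I i + (b^2 + 2 * b * P))"
        proof -
          have "norm (x I (Suc i) k - y) \<le> norm ((z - \<alpha> k *\<^sub>R d) - y)"
            using P_lip[of "z - \<alpha> k *\<^sub>R d" y] P_self[OF yX] step by simp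
          then have "(norm (x I (Suc i) k - y))^2 \<le> (norm ((z - y) - \<alpha> k *\<^sub>R d))^2"
            by (simp add: power_mono algebra_simps)
          also have "\<dots> = (norm (z - y))^2 - 2 * \<alpha> k * (d \<bullet> (z - y)) + (\<alpha> k)^2 * (norm d)^2"
            by (rule exp_sq)
          finally have A: "(norm (x I (Suc i) k - y))^2 \<le> (norm (z - y))^2 - 2 * \<alpha> k * (d \<bullet> (z - y)) + (\<alpha> k)^2 * (norm d)^2" .
          have B1: "2 * \<alpha> k * (d \<bullet> (z - y)) \<ge> 2 * \<alpha> k * (e - b * (\<alpha> k * P))"
            using inner_lb a0 by simp
          have B2: "(norm d)^2 \<le> b^2" using nd by (simp add: power_mono)
          have B3: "(\<alpha> k)^2 * (norm d)^2 \<le> (\<alpha> k)^2 * b^2" using B2 by (simp add: mult_left_mono)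
          have eq: "2 * \<alpha> k * (e - b * (\<alpha> k * P)) = 2 * \<alpha> k * e - (\<alpha> k)^2 * (2 * b * P)"
            by (simp add: power2_eq_square algebra_simps)
          have x1: "(\<alpha> k)^2 * (Q I i + (b^2 + 2 * b * P)) = (\<alpha> k)^2 * Q I i + (\<alpha> k)^2 * b^2 + (\<alpha> k)^2 * (2 * b * P)"
            by (simp add: algebra_simps)
          have x2: "2 * \<alpha> k * ((\<Sum>t=1..i. E I t) + e) = 2 * \<alpha> k * (\<Sum>t=1..i. E I t) + 2 * \<alpha> k * e"
            by (simp add: algebra_simps)
          have IH2': "(norm (z - y))^2 \<le> (norm (c - y))^2 - 2 * \<alpha> k * (\<Sum>t=1..i. E I t) + (\<alpha> k)^2 * Q I i"
            using IH2 by (simp add: z_def)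
          show ?thesis unfolding x1 x2 using A B1 B3 IH2' eq by linarith
        qed
        have sE: "(\<Sum>t=1..Suc i. E I t) = (\<Sum>t=1..i. E I t) + e" by (simp add: e_def)
        have sB: "(\<Sum>t=1..Suc i. B I t) = P + b" by (simp add: P_def b_def)
        have sQ: "Q I (Suc i) = Q I i + (b^2 + 2 * b * P)" by (simp add: Q_def b_def P_def)
        show "norm (x I (Suc i) k - c) \<le> \<alpha> k * (\<Sum>t=1..Suc i. B I t)
     \<and> (norm (x I (Suc i) k - y))^2 \<le> (norm (c - y))^2 - 2 * \<alpha> k * (\<Sum>t=1..Suc i. E I t) + (\<alpha> k)^2 * Q I (Suc i)"
          using d1 d2 sE sB sQ by simp
      qed
    qed
  qed
  have fin: "(norm (x I \<Delta> k - y))^2 \<le> (norm (c - y))^2 - 2 * \<alpha> k * (\<Sum>t=1..\<Delta>. E I t) + (\<alpha> k)^2 * Q I \<Delta>"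
    if "I \<in> {1..S}" for I using main[OF that] by blast
  have avg: "(norm (x J 0 (Suc k) - y))^2 \<le> (1 / real S) * (\<Sum>I=1..S. (norm (x I \<Delta> k - y))^2)"
  proof -
    have "x J 0 (Suc k) - y = (1 / real (card {1..S})) *\<^sub>R (\<Sum>I=1..S. x I \<Delta> k - y)"
    proof -
      have "(\<Sum>I=1..S. y) = real S *\<^sub>R y" using sum_constant_scaleR[of y "{1..S}"] by simp
      then show ?thesis
        using consensus[OF J, of k] Spos by (simp add: sum_subtractf scaleR_diff_right)
    qed
    then show ?thesis using avg_sq[of "{1..S}" "\<lambda>I. x I \<Delta> k - y"] S1 by simp
  qed
  also have "\<dots> \<le> (1 / real S) * (\<Sum>I=1..S. (norm (c - y))^2 - 2 * \<alpha> k * (\<Sum>t=1..\<Delta>. E I t) + (\<alpha> k)^2 * Q I \<Delta>)"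
    using Spos by (intro mult_left_mono sum_mono fin) auto
  also have "\<dots> = (norm (c - y))^2 - 2 * \<alpha> k / real S * (\<Sum>I=1..S. \<Sum>t=1..\<Delta>. E I t) + 1 / real S * (\<alpha> k)^2 * (\<Sum>I=1..S. Q I \<Delta>)"
  proof -
    have "(\<Sum>I=1..S. (norm (c - y))^2 - 2 * \<alpha> k * (\<Sum>t=1..\<Delta>. E I t) + (\<alpha> k)^2 * Q I \<Delta>)
       = real S * (norm (c - y))^2 - 2 * \<alpha> k * (\<Sum>I=1..S. \<Sum>t=1..\<Delta>. E I t) + (\<alpha> k)^2 * (\<Sum>I=1..S. Q I \<Delta>)"
      by (simp add: sum.distrib sum_subtractf sum_distrib_left)
    then show ?thesis using Spos by (simp add: field_simps)
  qed
  also have "(\<Sum>I=1..S. \<Sum>t=1..\<Delta>. E I t) = M * ((\<Sum>h=1..C. fh h c) - (\<Sum>h=1..C. fh h y))"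
  proof -
    have "(\<Sum>I=1..S. \<Sum>t=1..\<Delta>. E I t) = (\<Sum>h=1..C. (\<Sum>t=1..\<Delta>. \<Sum>I=1..S. W (t-1) k I h) * (fh h c - fh h y))"
    proof -
      define F where "F I t h = W (t-1) k I h * (fh h c - fh h y)" for I t h
      have "(\<Sum>I=1..S. \<Sum>t=1..\<Delta>. E I t) = (\<Sum>I=1..S. \<Sum>t=1..\<Delta>. \<Sum>h=1..C. F I t h)"
        by (simp add: E_def F_def)
      also have "\<dots> = (\<Sum>I=1..S. \<Sum>h=1..C. \<Sum>t=1..\<Delta>. F I t h)"
        by (rule sum.cong[OF refl], rule sum.swap)
      also have "\<dots> = (\<Sum>h=1..C. \<Sum>I=1..S. \<Sum>t=1..\<Delta>. F I t h)"
        by (rule sum.swap)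
      also have "\<dots> = (\<Sum>h=1..C. \<Sum>t=1..\<Delta>. \<Sum>I=1..S. F I t h)"
        by (rule sum.cong[OF refl], rule sum.swap)
      finally show ?thesis by (simp add: F_def sum_distrib_right)
    qed
    also have "\<dots> = (\<Sum>h=1..C. M * (fh h c - fh h y))"
      by (rule sum.cong[OF refl]) (use SLC in simp)
    finally show ?thesis by (simp add: sum_distrib_left[symmetric] sum_subtractf)
  qed
  also have "(\<Sum>I=1..S. Q I \<Delta>) = C0sq S C \<Delta> W L k"
    by (simp add: C0sq_def Q_def B_def)
  finally show "(norm (x J 0 (Suc k) - y))^2
       \<le> (norm (x J 0 k - y))^2
          - 2 * M / real S * \<alpha> k * ((\<Sum>h=1..C. fh h (x J 0 k)) - (\<Sum>h=1..C. fh h y))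
          + 1 / real S * (\<alpha> k)^2 * C0sq S C \<Delta> W L k"
    by (simp add: c_def algebra_simps)
qed

end
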